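(* Let $K$ be a field, $s\ge2$, $S=K[t_1,\ldots,t_s]$ with each $t_i$ of degree $1$, and let $\mathcal{L}\subset\mathbb{Z}^s$ be a homogeneous lattice with $\mathbb{Z}$-basis $\alpha_1,\ldots,\alpha_{s-1}$. Then $$\deg S/I(\mathcal{L})=(s-1)!\,{\rm vol}({\rm conv}(0,\alpha_1,\ldots,\alpha_{s-1})),$$ where ${\rm vol}$ is the relative volume and ${\rm conv}$ the convex hull.
   Context: A lattice is a subgroup of $\mathbb{Z}^s$; it is homogeneous if $\sum_ia_i=0$ for all $a\in\mathcal{L}$. For $a\in\mathbb{Z}^s$ write $a=a^+-a^-$ with $a^+,a^-\in\mathbb{N}^s$ of disjoint supports; $I(\mathcal{L})=(\{t^{a^+}-t^{a^-}:a\in\mathcal{L}\})$. The relative volume of an $n$-dimensional lattice polytope $\mathcal{P}\subset\mathbb{R}^s$ is its $n$-dimensional volume measured in its affine hull, normalized with respect to the lattice of integer points of the affine hull (equivalently $\lim_{k\to\infty}|k\mathcal{P}\cap\mathbb{Z}^s|/k^n$). For a graded ideal $I$, with Hilbert function $H_I(d)=\dim_K S_d/I_d$ and Hilbert polynomial $h_I(t)=c_kt^k+\cdots$ (agreeing with $H_I(d)$ for $d\gg0$; $k=-1$ meaning $h_I=0$), $\deg S/I=c_k\,k!$ if $k\ge0$ and $\dim_K S/I$ if $k=-1$. *)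

theory Defs
  imports "HOL-Analysis.Analysis" "HOL-Library.Poly_Mapping" "HOL-Computational_Algebra.Polynomial"
begin

text \<open>The polynomial ring S = K[t_i : i in 'n], with 'n a finite type of cardinality s.
  Polynomials are finitely supported maps from exponent vectors to coefficients.\<close>
type_synonym ('n, 'k) mpoly = "('n \<Rightarrow>\<^sub>0 nat) \<Rightarrow>\<^sub>0 'k"

definition kscale :: "'k::field \<Rightarrow> ('n, 'k) mpoly \<Rightarrow> ('n, 'k) mpoly" where
  "kscale c p = Poly_Mapping.single 0 c * p"

definition kdim :: "('n, 'k::field) mpoly set \<Rightarrow> nat" where
  "kdim V = vector_space.dim (kscale :: 'k \<Rightarrow> _) V"

definition mdeg :: "('n::finite \<Rightarrow>\<^sub>0 nat) \<Rightarrow> nat" where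
  "mdeg m = (\<Sum>i\<in>UNIV. Poly_Mapping.lookup m i)"

definition Sdeg :: "nat \<Rightarrow> ('n::finite, 'k::field) mpoly set" where
  "Sdeg d = {p. \<forall>m\<in>Poly_Mapping.keys p. mdeg m = d}"

definition ideal_gen :: "('n, 'k::comm_ring_1) mpoly set \<Rightarrow> ('n, 'k) mpoly set" where
  "ideal_gen G = {p. \<exists>F q. finite F \<and> F \<subseteq> G \<and> p = (\<Sum>g\<in>F. q g * g)}"

text \<open>Hilbert function H_I(d) = dim_K S_d / I_d = dim_K S_d - dim_K I_d.\<close>
definition hilbert_fun :: "('n::finite, 'k::field) mpoly set \<Rightarrow> nat \<Rightarrow> nat" where
  "hilbert_fun I d = kdim (Sdeg d :: ('n, 'k) mpoly set) - kdim (I \<inter> Sdeg d)"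

definition is_hilbert_poly :: "('n::finite, 'k::field) mpoly set \<Rightarrow> real poly \<Rightarrow> bool" where
  "is_hilbert_poly I p \<longleftrightarrow> (\<forall>\<^sub>F d in sequentially. real (hilbert_fun I d) = poly p (real d))"

text \<open>Degree (multiplicity) of S/I: c_k k! if the Hilbert polynomial has degree k >= 0,
  and dim_K S/I = sum of all H_I(d) if the Hilbert polynomial is zero.\<close>
definition degree_quot :: "('n::finite, 'k::field) mpoly set \<Rightarrow> real" where
  "degree_quot I = (let p = (THE p. is_hilbert_poly I p) in
     if p = 0 then real (\<Sum>d\<in>{d. hilbert_fun I d \<noteq> 0}. hilbert_fun I d)
     else lead_coeff p * fact (degree p))"

definition pos_part :: "int^'n::finite \<Rightarrow> ('n \<Rightarrow>\<^sub>0 nat)" where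
  "pos_part a = Abs_poly_mapping (\<lambda>i. nat (a $ i))"

definition neg_part :: "int^'n::finite \<Rightarrow> ('n \<Rightarrow>\<^sub>0 nat)" where
  "neg_part a = Abs_poly_mapping (\<lambda>i. nat (- (a $ i)))"

definition tmon :: "('n \<Rightarrow>\<^sub>0 nat) \<Rightarrow> ('n, 'k::comm_ring_1) mpoly" where
  "tmon e = Poly_Mapping.single e 1"

definition lattice_ideal :: "(int^'n::finite) set \<Rightarrow> ('n, 'k::comm_ring_1) mpoly set" where
  "lattice_ideal L = ideal_gen {tmon (pos_part a) - tmon (neg_part a) | a. a \<in> L}"

definition homogeneous_lattice :: "(int^'n::finite) set \<Rightarrow> bool" where
  "homogeneous_lattice L \<longleftrightarrow> (\<forall>a\<in>L. (\<Sum>i\<in>UNIV. a $ i) = 0)"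

definition is_Z_basis :: "(int^'n::finite) set \<Rightarrow> nat \<Rightarrow> (nat \<Rightarrow> int^'n) \<Rightarrow> bool" where
  "is_Z_basis L r \<alpha> \<longleftrightarrow>
     L = {(\<Sum>i<r. c i *s \<alpha> i) | c. True} \<and>
     (\<forall>c. (\<Sum>i<r. c i *s \<alpha> i) = 0 \<longrightarrow> (\<forall>i<r. c i = 0))"

definition real_vec :: "int^'n \<Rightarrow> real^'n" where
  "real_vec a = (\<chi> i. real_of_int (a $ i))"

definition rel_volume :: "(real^'n::finite) set \<Rightarrow> real" where
  "rel_volume P = lim (\<lambda>k::nat. real (card ((\<lambda>x. real k *\<^sub>R x) ` P \<inter> {x. \<forall>i. x $ i \<in> \<int>}))
                                 / real k ^ nat (aff_dim P))"

end

theory Submission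
  imports Defs
begin


lemma int_dep:
  fixes v :: "'i \<Rightarrow> 'j \<Rightarrow> int" and c :: "'i \<Rightarrow> real"
  assumes "finite J"
  shows "finite S \<Longrightarrow> (\<forall>j\<in>J. (\<Sum>i\<in>S. c i * real_of_int (v i j)) = 0) \<Longrightarrow> (\<exists>i\<in>S. c i \<noteq> 0)
     \<Longrightarrow> \<exists>d. (\<forall>j\<in>J. (\<Sum>i\<in>S. d i * v i j) = 0) \<and> (\<exists>i\<in>S. d i \<noteq> 0)"
  using assms
proof (induction J arbitrary: S c v rule: finite_induct)
  case empty
  then show ?case by (rule_tac x="\<lambda>_. 1" in exI) auto
next
  case (insert j J)
  show ?case
  proof (cases "\<forall>i\<in>S. v i j = 0")
    case True
    from insert.IH[OF insert.prems(1) _ insert.prems(3), of v] insert.prems(2)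
    obtain d where "\<forall>j\<in>J. (\<Sum>i\<in>S. d i * v i j) = 0" "\<exists>i\<in>S. d i \<noteq> 0" by auto
    then show ?thesis using True by (rule_tac x=d in exI) auto
  next
    case False
    then obtain k where k: "k \<in> S" "v k j \<noteq> 0" by auto
    define p where "p = v k j"
    define w where "w i j' = p * v i j' - v i j * v k j'" for i j'
    have wk: "w k j' = 0" for j' by (simp add: w_def p_def)
    have sumS: "(\<Sum>i\<in>S. c i * real_of_int (w i j')) = 
       real_of_int p * (\<Sum>i\<in>S. c i * real_of_int (v i j')) - (\<Sum>i\<in>S. c i * real_of_int (v i j)) * real_of_int (v k j')" for j'
      by (simp add: w_def sum_distrib_left sum_distrib_right sum_subtractf algebra_simps)
    have "(\<forall>j'\<in>J. (\<Sum>i\<in>S - {k}. c i * real_of_int (w i j')) = 0)"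
    proof
      fix j' assume "j' \<in> J"
      have "(\<Sum>i\<in>S - {k}. c i * real_of_int (w i j')) = (\<Sum>i\<in>S. c i * real_of_int (w i j'))"
        using k insert.prems(1) by (simp add: sum.remove wk)
      also have "\<dots> = 0" using sumS insert.prems(2) \<open>j' \<in> J\<close> by simp
      finally show "(\<Sum>i\<in>S - {k}. c i * real_of_int (w i j')) = 0" .
    qed
    moreover have "\<exists>i\<in>S - {k}. c i \<noteq> 0"
    proof (rule ccontr)
      assume nc: "\<not> (\<exists>i\<in>S - {k}. c i \<noteq> 0)"
      then have "(\<Sum>i\<in>S. c i * real_of_int (v i j)) = c k * real_of_int (v k j)"
        using k insert.prems(1) by (simp add: sum.remove)
      then have "c k = 0" using insert.prems(2) k by simp
      then show False using nc insert.prems(3) by auto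
    qed
    ultimately obtain d where d: "\<forall>j'\<in>J. (\<Sum>i\<in>S - {k}. d i * w i j') = 0" "\<exists>i\<in>S - {k}. d i \<noteq> 0"
      using insert.IH[of "S - {k}" c w] insert.prems(1) by auto
    define e where "e i = (if i = k then - (\<Sum>i\<in>S - {k}. d i * v i j) else p * d i)" for i
    have esum: "(\<Sum>i\<in>S. e i * v i j') = (\<Sum>i\<in>S - {k}. d i * w i j')" for j'
    proof -
      have "(\<Sum>i\<in>S. e i * v i j') = e k * v k j' + (\<Sum>i\<in>S - {k}. e i * v i j')"
        using k insert.prems(1) by (simp add: sum.remove)
      also have "(\<Sum>i\<in>S - {k}. e i * v i j') = (\<Sum>i\<in>S - {k}. p * d i * v i j')"
        by (rule sum.cong) (auto simp: e_def)
      finally show ?thesis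
        by (simp add: e_def w_def sum_distrib_left sum_distrib_right sum_subtractf algebra_simps)
    qed
    have "\<forall>j'\<in>insert j J. (\<Sum>i\<in>S. e i * v i j') = 0"
    proof
      fix j' assume "j' \<in> insert j J"
      then show "(\<Sum>i\<in>S. e i * v i j') = 0"
      proof
        assume "j' = j"
        have "(\<Sum>i\<in>S - {k}. d i * w i j) = 0"
          by (simp add: w_def p_def sum_subtractf algebra_simps sum_distrib_left sum_distrib_right)
        then show ?thesis using esum \<open>j' = j\<close> by simp
      qed (use esum d in auto)
    qed
    moreover have "\<exists>i\<in>S. e i \<noteq> 0" using d(2) k by (auto simp: e_def p_def)
    ultimately show ?thesis by blast
  qed
qed


locale latt =
  fixes L :: "(int^'n::finite) set" and \<alpha> :: "nat \<Rightarrow> int^'n" and m :: nat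
  assumes m_def: "m = CARD('n) - 1" and card2: "CARD('n) \<ge> 2"
    and homL: "homogeneous_lattice L"
    and zb: "is_Z_basis L m \<alpha>"
begin


definition comb :: "(nat \<Rightarrow> real) \<Rightarrow> real^'n" where
  "comb c = (\<Sum>i<m. c i *\<^sub>R real_vec (\<alpha> i))"

definition H :: "(real^'n) set" where "H = {x. (\<Sum>j\<in>UNIV. x$j) = 0}"

lemma m_pos: "m \<ge> 1" using card2 m_def by simp

lemma L_eq: "L = {(\<Sum>i<m. c i *s \<alpha> i) | c. True}"
  using zb by (simp add: is_Z_basis_def)

lemma L_indep: "(\<Sum>i<m. c i *s \<alpha> i) = 0 \<Longrightarrow> i < m \<Longrightarrow> c i = 0"
  using zb by (simp add: is_Z_basis_def)

lemma comb_lincomb_in_L: "(\<Sum>i<m. n i *s \<alpha> i) \<in> L"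
  unfolding L_eq by (rule CollectI, rule exI[of _ n]) simp

lemma L_add: "a \<in> L \<Longrightarrow> b \<in> L \<Longrightarrow> a + b \<in> L"
proof -
  assume "a \<in> L" "b \<in> L"
  then obtain c d where "a = (\<Sum>i<m. c i *s \<alpha> i)" "b = (\<Sum>i<m. d i *s \<alpha> i)"
    by (auto simp: L_eq)
  then have "a + b = (\<Sum>i<m. (c i + d i) *s \<alpha> i)"
    by (simp add: vector_sadd_rdistrib sum.distrib)
  then show ?thesis using comb_lincomb_in_L[of "\<lambda>i. c i + d i"] by simp
qed

lemma L_uminus: "a \<in> L \<Longrightarrow> - a \<in> L"
proof -
  assume "a \<in> L"
  then obtain c where "a = (\<Sum>i<m. c i *s \<alpha> i)"
    by (auto simp: L_eq)
  then have "- a = (\<Sum>i<m. (- c i) *s \<alpha> i)"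
    by (simp add: vec_eq_iff sum_negf)
  then show ?thesis using comb_lincomb_in_L[of "\<lambda>i. - c i"] by simp
qed

lemma L_diff: "a \<in> L \<Longrightarrow> b \<in> L \<Longrightarrow> a - b \<in> L"
  using L_add[of a "-b"] L_uminus[of b] by simp

lemma L_zero: "0 \<in> L"
proof -
  have "0 = (\<Sum>i<m. (0::int) *s \<alpha> i)" by (simp add: vec_eq_iff)
  then show ?thesis using comb_lincomb_in_L[of "\<lambda>i. 0"] by simp
qed

lemma alpha_in_L: "i < m \<Longrightarrow> \<alpha> i \<in> L"
proof -
  assume i: "i < m"
  have "(\<Sum>k<m. (if k = i then 1 else 0::int) *s \<alpha> k) = (\<Sum>k<m. if k = i then \<alpha> k else 0)"
    by (rule sum.cong) auto
  also have "\<dots> = \<alpha> i" using i by (simp add: sum.delta')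
  finally show ?thesis using comb_lincomb_in_L[of "\<lambda>k. if k = i then 1 else 0"] by simp
qed


lemma real_vec_add: "real_vec (a + b) = real_vec a + real_vec b"
  by (simp add: real_vec_def vec_eq_iff)
lemma real_vec_diff: "real_vec (a - b) = real_vec a - real_vec b"
  by (simp add: real_vec_def vec_eq_iff)
lemma real_vec_zero[simp]: "real_vec 0 = 0"
  by (simp add: real_vec_def vec_eq_iff)
lemma real_vec_inj: "real_vec a = real_vec b \<longleftrightarrow> a = b"
  by (simp add: real_vec_def vec_eq_iff)
lemma real_vec_comp: "real_vec a $ j = real_of_int (a $ j)"
  by (simp add: real_vec_def)
lemma real_vec_lincomb: "real_vec (\<Sum>i<m. n i *s \<alpha> i) = comb (\<lambda>i. real_of_int (n i))"
  by (simp add: real_vec_def comb_def vec_eq_iff)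

lemma comb_comp: "comb c $ j = (\<Sum>i<m. c i * real_of_int (\<alpha> i $ j))"
  by (simp add: comb_def real_vec_def)

lemma comb_add: "comb (\<lambda>i. c i + d i) = comb c + comb d"
  by (simp add: comb_def scaleR_add_left sum.distrib)
lemma comb_diff: "comb (\<lambda>i. c i - d i) = comb c - comb d"
  by (simp add: comb_def scaleR_diff_left sum_subtractf)
lemma comb_scale: "comb (\<lambda>i. a * c i) = a *\<^sub>R comb c"
  by (simp add: comb_def scaleR_sum_right)
lemma comb_cong: "(\<And>i. i < m \<Longrightarrow> c i = d i) \<Longrightarrow> comb c = comb d"
  by (simp add: comb_def)

lemma comb_unit: "i < m \<Longrightarrow> comb (\<lambda>k. if k = i then 1 else 0) = real_vec (\<alpha> i)"
proof -
  assume i: "i < m"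
  have "comb (\<lambda>k. if k = i then 1 else 0) = (\<Sum>k<m. if k = i then real_vec (\<alpha> k) else 0)"
    unfolding comb_def by (rule sum.cong) auto
  also have "\<dots> = real_vec (\<alpha> i)" using i by (simp add: sum.delta')
  finally show ?thesis .
qed

lemma comb_zero: "comb c = 0 \<Longrightarrow> i < m \<Longrightarrow> c i = 0"
proof (rule ccontr)
  assume 0: "comb c = 0" "i < m" "c i \<noteq> 0"
  have "\<forall>j\<in>UNIV. (\<Sum>i\<in>{..<m}. c i * real_of_int (\<alpha> i $ j)) = 0"
    using 0 by (metis comb_comp zero_index)
  then obtain d where d: "\<forall>j\<in>UNIV. (\<Sum>i\<in>{..<m}. d i * (\<alpha> i $ j)) = 0" "\<exists>i\<in>{..<m}. d i \<noteq> 0"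
    using int_dep[of "UNIV::'n set" "{..<m}" c "\<lambda>i j. \<alpha> i $ j"] 0 by auto
  have "(\<Sum>i<m. d i *s \<alpha> i) = 0" using d(1) by (simp add: vec_eq_iff)
  then show False using L_indep d(2) by auto
qed

lemma comb_inj: "comb c = comb d \<Longrightarrow> i < m \<Longrightarrow> c i = d i"
  using comb_zero[of "\<lambda>i. c i - d i" i] by (simp add: comb_diff)

lemma alpha_H: "i < m \<Longrightarrow> real_vec (\<alpha> i) \<in> H"
  using homL alpha_in_L[of i] unfolding homogeneous_lattice_def H_def real_vec_def
  by (simp flip: of_int_sum)

lemma subspace_H: "subspace H"
  unfolding H_def subspace_def by (auto simp: sum.distrib simp flip: sum_distrib_left)

lemma comb_H: "comb c \<in> H"
  unfolding comb_def
  by (rule subspace_sum[OF subspace_H]) (simp add: subspace_mul[OF subspace_H] alpha_H)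

abbreviation "B \<equiv> (\<lambda>i. real_vec (\<alpha> i)) ` {..<m}"

lemma inj_B: "inj_on (\<lambda>i. real_vec (\<alpha> i)) {..<m}"
proof (rule inj_onI)
  fix i j assume ij: "i \<in> {..<m}" "j \<in> {..<m}" "real_vec (\<alpha> i) = real_vec (\<alpha> j)"
  show "i = j"
  proof (rule ccontr)
    assume "i \<noteq> j"
    define c where "c k = (if k = i then 1 else 0) - (if k = j then 1 else 0::real)" for k
    have "comb c = real_vec (\<alpha> i) - real_vec (\<alpha> j)"
      using ij unfolding c_def by (simp add: comb_diff comb_unit)
    then have "comb c = 0" using ij by simp
    then show False using comb_zero[of c i] ij \<open>i \<noteq> j\<close> by (simp add: c_def)
  qed
qed

lemma card_B: "card B = m" using inj_B by (simp add: card_image)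

lemma indep_B: "independent B"
  unfolding independent_explicit
proof (intro conjI allI impI ballI)
  show "finite B" by simp
  fix u v assume u: "(\<Sum>v\<in>B. u v *\<^sub>R v) = 0" and v: "v \<in> B"
  have "(\<Sum>v\<in>B. u v *\<^sub>R v) = comb (\<lambda>i. u (real_vec (\<alpha> i)))"
    unfolding comb_def by (simp add: sum.reindex[OF inj_B])
  then obtain i where "i < m" "v = real_vec (\<alpha> i)" using v by auto
  then show "u v = 0" using comb_zero[of "\<lambda>i. u (real_vec (\<alpha> i))" i] u
    \<open>(\<Sum>v\<in>B. u v *\<^sub>R v) = comb _\<close> by simp
qed

lemma span_B: "span B = H"
proof (rule subspace_dim_equal)
  show "subspace (span B)" by simp
  show "subspace H" by (rule subspace_H)
  show "span B \<subseteq> H" by (rule span_minimal) (use alpha_H subspace_H in auto)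
  have "H = {x. (\<chi> j. (1::real)) \<bullet> x = 0}" by (simp add: H_def inner_vec_def)
  moreover have "(\<chi> j. (1::real)) \<noteq> 0" by (simp add: vec_eq_iff)
  ultimately have "dim H = CARD('n) - 1" using dim_hyperplane[of "(\<chi> j. (1::real))::real^'n"] by simp
  then show "dim H \<le> dim (span B)" using indep_B card_B dim_eq_card_independent[OF indep_B] m_def by simp
qed

lemma H_comb: "y \<in> H \<Longrightarrow> \<exists>c. y = comb c"
proof -
  assume "y \<in> H"
  then have "y \<in> span B" using span_B by simp
  then obtain u where "y = (\<Sum>v\<in>B. u v *\<^sub>R v)" using span_finite[of B] by auto
  then have "y = comb (\<lambda>i. u (real_vec (\<alpha> i)))"
    unfolding comb_def by (simp add: sum.reindex[OF inj_B])
  then show ?thesis by blast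
qed

end


context latt begin

definition P :: "(real^'n) set" where "P = convex hull (insert 0 B)"
definition Q :: "real \<Rightarrow> (real^'n) set" where
  "Q t = {comb c | c. (\<forall>i<m. 0 \<le> c i) \<and> (\<Sum>i<m. c i) \<le> t}"

lemma convex_Q: "convex (Q t)"
  unfolding convex_def Q_def
proof (clarify)
  fix c d :: "nat \<Rightarrow> real" and u v :: real
  assume c: "\<forall>i<m. 0 \<le> c i" "(\<Sum>i<m. c i) \<le> t" and d: "\<forall>i<m. 0 \<le> d i" "(\<Sum>i<m. d i) \<le> t"
    and uv: "0 \<le> u" "0 \<le> v" "u + v = 1"
  have "u *\<^sub>R comb c + v *\<^sub>R comb d = comb (\<lambda>i. u * c i + v * d i)"
    by (simp add: comb_add comb_scale)
  moreover have "\<forall>i<m. 0 \<le> u * c i + v * d i" using c d uv by simp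
  moreover have "(\<Sum>i<m. u * c i + v * d i) \<le> t"
  proof -
    have "(\<Sum>i<m. u * c i + v * d i) = u * (\<Sum>i<m. c i) + v * (\<Sum>i<m. d i)"
      by (simp add: sum.distrib sum_distrib_left)
    also have "\<dots> \<le> u * t + v * t" using c d uv by (intro add_mono mult_left_mono) auto
    also have "\<dots> = t" using uv by (metis distrib_right mult_1)
    finally show ?thesis .
  qed
  ultimately show "\<exists>e. u *\<^sub>R comb c + v *\<^sub>R comb d = comb e \<and> (\<forall>i<m. 0 \<le> e i) \<and> (\<Sum>i<m. e i) \<le> t"
    by blast
qed

lemma P_eq: "P = Q 1"
proof
  show "P \<subseteq> Q 1" unfolding P_def
  proof (rule hull_minimal)
    show "convex (Q 1)" by (rule convex_Q)
    show "insert 0 B \<subseteq> Q 1"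
    proof
      fix x assume "x \<in> insert 0 B"
      then show "x \<in> Q 1"
      proof
        assume "x = 0"
        then have "x = comb (\<lambda>_. 0)" by (simp add: comb_def)
        then show ?thesis unfolding Q_def by force
      next
        assume "x \<in> B"
        then obtain i where i: "i < m" "x = real_vec (\<alpha> i)" by auto
        have "(\<Sum>k<m. if k = i then 1 else 0::real) = 1" using i by (simp add: sum.delta')
        then show ?thesis unfolding Q_def using i comb_unit[of i]
          by (intro CollectI exI[of _ "\<lambda>k. if k = i then 1 else 0"]) auto
      qed
    qed
  qed
  show "Q 1 \<subseteq> P"
  proof
    fix x assume "x \<in> Q 1"
    then obtain c where c: "x = comb c" "\<forall>i<m. 0 \<le> c i" "(\<Sum>i<m. c i) \<le> 1"
      unfolding Q_def by auto
    define a where "a i = (if i < m then c i else 1 - (\<Sum>i<m. c i))" for i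
    define y where "y i = (if i < m then real_vec (\<alpha> i) else 0)" for i
    have "(\<Sum>j\<in>{..<Suc m}. a j *\<^sub>R y j) \<in> P" unfolding P_def
    proof (rule convex_sum)
      show "(\<Sum>i\<in>{..<Suc m}. a i) = 1" by (simp add: a_def)
      show "\<And>i. i \<in> {..<Suc m} \<Longrightarrow> 0 \<le> a i" using c by (auto simp: a_def)
      show "\<And>i. i \<in> {..<Suc m} \<Longrightarrow> y i \<in> convex hull insert 0 B"
        by (auto simp: y_def intro: hull_inc)
    qed auto
    moreover have "(\<Sum>j\<in>{..<Suc m}. a j *\<^sub>R y j) = x"
      by (simp add: c(1) comb_def a_def y_def)
    ultimately show "x \<in> P" by simp
  qed
qed

lemma aff_dim_P: "aff_dim P = int m"
proof -
  have "aff_dim P = aff_dim (insert 0 B)" unfolding P_def by (rule aff_dim_convex_hull)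
  also have "\<dots> = int (dim ((+) (- 0) ` insert 0 B))"
    by (rule aff_dim_eq_dim) (simp add: hull_inc)
  also have "dim ((+) (- 0) ` insert 0 B) = dim (insert 0 B)" by simp
  also have "\<dots> = dim B" by (simp add: dim_insert span_zero)
  also have "\<dots> = m" using dim_eq_card_independent[OF indep_B] card_B by simp
  finally show ?thesis .
qed

lemma scaled_P: "k > 0 \<Longrightarrow> (\<lambda>x. k *\<^sub>R x) ` P = Q k"
proof -
  assume k: "k > 0"
  show ?thesis unfolding P_eq
  proof
    show "(*\<^sub>R) k ` Q 1 \<subseteq> Q k"
    proof
      fix x assume "x \<in> (*\<^sub>R) k ` Q 1"
      then obtain c where c: "x = k *\<^sub>R comb c" "\<forall>i<m. 0 \<le> c i" "(\<Sum>i<m. c i) \<le> 1"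
        unfolding Q_def by auto
      have "x = comb (\<lambda>i. k * c i)" using c by (simp add: comb_scale)
      moreover have "\<forall>i<m. 0 \<le> k * c i" using c k by simp
      moreover have "(\<Sum>i<m. k * c i) \<le> k" using c k by (simp add: flip: sum_distrib_left)
      ultimately show "x \<in> Q k" unfolding Q_def by blast
    qed
    show "Q k \<subseteq> (*\<^sub>R) k ` Q 1"
    proof
      fix x assume "x \<in> Q k"
      then obtain c where c: "x = comb c" "\<forall>i<m. 0 \<le> c i" "(\<Sum>i<m. c i) \<le> k"
        unfolding Q_def by auto
      have "comb (\<lambda>i. c i / k) \<in> Q 1"
      proof -
        have "(\<Sum>i<m. c i / k) \<le> 1" using c k by (simp add: flip: sum_divide_distrib)
        then show ?thesis unfolding Q_def using c k by auto
      qed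
      moreover have "x = k *\<^sub>R comb (\<lambda>i. c i / k)"
        using c k by (simp flip: comb_scale)
      ultimately show "x \<in> (*\<^sub>R) k ` Q 1" by blast
    qed
  qed
qed

end


lemma choose_lower_bound:
  assumes "k \<le> n"
  shows "real (n - k) ^ k \<le> fact k * real (n choose k)"
proof -
  have "real (n choose k) = (\<Prod>i = 0..<k. real (n - i) / real (k - i))"
    using binomial_altdef_of_nat[OF assms] by simp
  moreover have "(\<Prod>i = 0..<k. real (n - k) / real (k - i)) \<le> (\<Prod>i = 0..<k. real (n - i) / real (k - i))"
    by (rule prod_mono) (use assms in \<open>auto intro!: divide_right_mono\<close>)
  moreover have "(\<Prod>i = 0..<k. real (n - k) / real (k - i)) = real (n - k) ^ k / fact k"
  proof -
    have "(\<Prod>i = 0..<k. real (n - k) / real (k - i)) = (\<Prod>i = 0..<k. real (n - k)) / (\<Prod>i = 0..<k. real (k - i))"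
      by (rule prod_dividef)
    also have "(\<Prod>i = 0..<k. real (n - k)) = real (n - k) ^ k" by simp
    also have "(\<Prod>i = 0..<k. real (k - i)) = fact k" by (simp add: fact_prod_rev[of k] of_nat_prod)
    finally show ?thesis .
  qed
  ultimately have "real (n - k) ^ k / fact k \<le> real (n choose k)" by simp
  then show ?thesis by (simp add: divide_le_eq mult.commute)
qed

lemma choose_upper_bound: "fact k * real (n choose k) \<le> real n ^ k"
proof -
  have "(n choose k) * fact k \<le> n ^ k" by (rule binomial_fact_pow)
  then have "real ((n choose k) * fact k) \<le> real (n ^ k)" by (simp only: of_nat_le_iff)
  then show ?thesis by (simp add: mult.commute)
qed

lemma card_AA: "card {n :: nat \<Rightarrow> nat. (\<forall>i. i \<ge> m \<longrightarrow> n i = 0) \<and> (\<Sum>i<m. n i) \<le> K} = (K + m) choose m"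
proof -
  define A where "A = {n :: nat \<Rightarrow> nat. (\<forall>i. i \<ge> m \<longrightarrow> n i = 0) \<and> (\<Sum>i<m. n i) \<le> K}"
  define LS where "LS = {l::nat list. size l = Suc m \<and> sum_list l = K}"
  define g where "g n = map n [0..<m] @ [K - (\<Sum>i<m. n i)]" for n :: "nat \<Rightarrow> nat"
  have inj: "inj_on g A"
  proof (rule inj_onI)
    fix n n' assume "n \<in> A" "n' \<in> A" "g n = g n'"
    then have "map n [0..<m] = map n' [0..<m]" by (simp add: g_def)
    then have "\<forall>i<m. n i = n' i" by (simp add: map_eq_conv)
    then show "n = n'" using \<open>n \<in> A\<close> \<open>n' \<in> A\<close> unfolding A_def
    proof (intro ext)
      fix i show "n i = n' i" using \<open>\<forall>i<m. n i = n' i\<close> \<open>n \<in> A\<close> \<open>n' \<in> A\<close> unfolding A_def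
        by (cases "i < m") auto
    qed
  qed
  have img: "g ` A = LS"
  proof
    show "g ` A \<subseteq> LS"
    proof
      fix l assume "l \<in> g ` A"
      then obtain n where n: "n \<in> A" "l = g n" by auto
      have "sum_list (map n [0..<m]) = (\<Sum>i<m. n i)"
        by (simp add: sum_list_sum_nth atLeast0LessThan)
      then show "l \<in> LS" using n by (auto simp: LS_def g_def A_def)
    qed
    show "LS \<subseteq> g ` A"
    proof
      fix l assume l: "l \<in> LS"
      define n where "n i = (if i < m then l ! i else 0)" for i
      have sl: "sum_list l = (\<Sum>i<Suc m. l ! i)"
        using l by (simp add: LS_def sum_list_sum_nth atLeast0LessThan)
      have s: "(\<Sum>i<m. n i) = (\<Sum>i<m. l ! i)" by (simp add: n_def)
      have "(\<Sum>i<m. l ! i) + l ! m = K" using sl l by (simp add: LS_def)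
      then have "n \<in> A" using s by (auto simp: A_def n_def)
      moreover have "g n = l"
      proof -
        have "map n [0..<m] = take m l"
          using l by (auto simp: LS_def n_def intro!: nth_equalityI)
        moreover have "K - (\<Sum>i<m. n i) = l ! m" using s \<open>(\<Sum>i<m. l ! i) + l ! m = K\<close> by simp
        moreover have "l = take m l @ [l ! m]"
          using l by (simp add: LS_def take_Suc_conv_app_nth[symmetric])
        ultimately show ?thesis by (simp add: g_def)
      qed
      ultimately show "l \<in> g ` A" by blast
    qed
  qed
  have "card A = card LS" using card_image[OF inj] img by simp
  also have "card LS = (K + Suc m - 1) choose K" unfolding LS_def by (rule card_length_sum_list)
  also have "\<dots> = (K + m) choose m" by (simp add: binomial_symmetric[of m "K+m"] add.commute)
  finally show ?thesis unfolding A_def .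
qed

lemma finite_int_box: "finite {x::int^'n::finite. \<forall>j. \<bar>x$j\<bar> \<le> b}"
proof -
  have "{x::int^'n. \<forall>j. \<bar>x$j\<bar> \<le> b} \<subseteq> vec_lambda ` {f. \<forall>j. (j \<in> UNIV \<longrightarrow> f j \<in> {-b..b}) \<and> (j \<notin> UNIV \<longrightarrow> f j = 0)}"
  proof
    fix x :: "int^'n" assume "x \<in> {x. \<forall>j. \<bar>x$j\<bar> \<le> b}"
    then show "x \<in> vec_lambda ` {f. \<forall>j. (j \<in> UNIV \<longrightarrow> f j \<in> {-b..b}) \<and> (j \<notin> UNIV \<longrightarrow> f j = 0)}"
      by (intro image_eqI[of _ _ "vec_nth x"]) (auto simp: abs_le_iff minus_le_iff)
  qed
  moreover have "finite {f::'n \<Rightarrow> int. \<forall>j. (j \<in> UNIV \<longrightarrow> f j \<in> {-b..b}) \<and> (j \<notin> UNIV \<longrightarrow> f j = 0)}"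
    by (rule finite_set_of_finite_funs) auto
  ultimately show ?thesis by (rule finite_subset[OF _ finite_imageI])
qed

context latt begin

definition Zp :: "(real^'n) set" where "Zp = {x. \<forall>i. x $ i \<in> \<int>}"
definition F :: "(int^'n) set" where
  "F = {x. \<exists>c. real_vec x = comb c \<and> (\<forall>i<m. 0 \<le> c i \<and> c i < 1)}"
definition AA :: "nat \<Rightarrow> (nat \<Rightarrow> nat) set" where
  "AA K = {n. (\<forall>i. i \<ge> m \<longrightarrow> n i = 0) \<and> (\<Sum>i<m. n i) \<le> K}"
definition phi :: "(int^'n) \<times> (nat \<Rightarrow> nat) \<Rightarrow> real^'n" where
  "phi rn = real_vec (fst rn) + comb (\<lambda>i. real (snd rn i))"

lemma finite_F: "finite F"
proof -
  define b where "b = (\<Sum>j\<in>UNIV. \<Sum>i<m. \<bar>\<alpha> i $ j\<bar>)"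
  have "F \<subseteq> {x. \<forall>j. \<bar>x$j\<bar> \<le> b}"
  proof (clarify)
    fix x j assume "x \<in> F"
    then obtain c where c: "real_vec x = comb c" "\<forall>i<m. 0 \<le> c i \<and> c i < 1" by (auto simp: F_def)
    have "real_of_int \<bar>x$j\<bar> = \<bar>\<Sum>i<m. c i * real_of_int (\<alpha> i $ j)\<bar>"
      using arg_cong[OF c(1), of "\<lambda>v. \<bar>v $ j\<bar>"] by (simp add: comb_comp real_vec_comp)
    also have "\<dots> \<le> (\<Sum>i<m. \<bar>c i * real_of_int (\<alpha> i $ j)\<bar>)" by (rule sum_abs)
    also have "\<dots> \<le> (\<Sum>i<m. real_of_int \<bar>\<alpha> i $ j\<bar>)"
      by (rule sum_mono) (use c(2) in \<open>auto simp: abs_mult intro!: mult_left_le_one_le\<close>)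
    also have "\<dots> \<le> real_of_int b"
    proof -
      have "(\<Sum>i<m. \<bar>\<alpha> i $ j\<bar>) \<le> b" unfolding b_def
        by (rule member_le_sum[of j UNIV "\<lambda>j. \<Sum>i<m. \<bar>\<alpha> i $ j\<bar>"]) (auto intro: sum_nonneg)
      then show ?thesis by (simp flip: of_int_sum of_int_abs)
    qed
    finally show "\<bar>x$j\<bar> \<le> b" by simp
  qed
  then show ?thesis using finite_int_box finite_subset by blast
qed

lemma finite_AA: "finite (AA K)"
proof -
  have "AA K \<subseteq> {f. \<forall>i. (i \<in> {..<m} \<longrightarrow> f i \<in> {..K}) \<and> (i \<notin> {..<m} \<longrightarrow> f i = 0)}"
  proof clarify
    fix f i assume "f \<in> AA K"
    then have "\<forall>i. i \<ge> m \<longrightarrow> f i = 0" "(\<Sum>i<m. f i) \<le> K" by (auto simp: AA_def)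
    moreover have "i < m \<Longrightarrow> f i \<le> (\<Sum>i<m. f i)" by (rule member_le_sum) auto
    ultimately show "(i \<in> {..<m} \<longrightarrow> f i \<in> {..K}) \<and> (i \<notin> {..<m} \<longrightarrow> f i = 0)" by auto
  qed
  moreover have "finite {f. \<forall>i. (i \<in> {..<m} \<longrightarrow> f i \<in> {..K}) \<and> (i \<notin> {..<m} \<longrightarrow> (f::nat\<Rightarrow>nat) i = 0)}"
    by (rule finite_set_of_finite_funs) auto
  ultimately show ?thesis by (rule finite_subset)
qed

lemma card_AA': "card (AA K) = (K + m) choose m"
  unfolding AA_def by (rule card_AA)

lemma comb_nat_Zp: "comb (\<lambda>i. real (n i)) \<in> Zp"
  by (auto simp: Zp_def comb_comp intro!: Ints_sum Ints_mult)

lemma upper_incl: "Q (real k) \<inter> Zp \<subseteq> phi ` (F \<times> AA k)"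
proof
  fix x assume x: "x \<in> Q (real k) \<inter> Zp"
  then obtain c where c: "x = comb c" "\<forall>i<m. 0 \<le> c i" "(\<Sum>i<m. c i) \<le> real k"
    by (auto simp: Q_def)
  define n where "n i = (if i < m then nat \<lfloor>c i\<rfloor> else 0)" for i
  have nc: "i < m \<Longrightarrow> real (n i) = of_int \<lfloor>c i\<rfloor>" for i using c(2) by (simp add: n_def)
  define y where "y = x - comb (\<lambda>i. real (n i))"
  have yZ: "y \<in> Zp" using x comb_nat_Zp[of n] by (auto simp: y_def Zp_def)
  define r where "r = (\<chi> j. \<lfloor>y $ j\<rfloor>)"
  have ry: "real_vec r = y" using yZ by (auto simp: r_def real_vec_def Zp_def vec_eq_iff)
  have "y = comb (\<lambda>i. c i - real (n i))" by (simp add: y_def c(1) comb_diff)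
  moreover have "\<forall>i<m. 0 \<le> c i - real (n i) \<and> c i - real (n i) < 1"
  proof (intro allI impI)
    fix i assume "i < m"
    show "0 \<le> c i - real (n i) \<and> c i - real (n i) < 1"
      using nc[OF \<open>i < m\<close>] of_int_floor_le[of "c i"] real_of_int_floor_gt_diff_one[of "c i"] by linarith
  qed
  ultimately have "r \<in> F" using ry by (auto simp: F_def)
  moreover have "n \<in> AA k"
  proof -
    have "real (\<Sum>i<m. n i) = (\<Sum>i<m. real (n i))" by simp
    also have "\<dots> \<le> (\<Sum>i<m. c i)" by (rule sum_mono) (simp add: nc)
    finally have "real (\<Sum>i<m. n i) \<le> real k" using c(3) by linarith
    then show ?thesis by (auto simp: AA_def n_def simp del: of_nat_sum)
  qed
  moreover have "phi (r, n) = x" by (simp add: phi_def ry y_def)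
  ultimately show "x \<in> phi ` (F \<times> AA k)" by force
qed

lemma lower_incl: "k \<ge> m \<Longrightarrow> phi ` (F \<times> AA (k - m)) \<subseteq> Q (real k) \<inter> Zp"
proof clarify
  fix r n assume k: "k \<ge> m" and r: "r \<in> F" and n: "n \<in> AA (k - m)"
  obtain c where c: "real_vec r = comb c" "\<forall>i<m. 0 \<le> c i \<and> c i < 1" using r by (auto simp: F_def)
  have "phi (r, n) = comb (\<lambda>i. c i + real (n i))" by (simp add: phi_def c(1) comb_add)
  moreover have "(\<Sum>i<m. c i + real (n i)) \<le> real k"
  proof -
    have "(\<Sum>i<m. c i) \<le> (\<Sum>i<(m::nat). 1)" by (rule sum_mono) (use c(2) in auto)
    moreover have "(\<Sum>i<m. real (n i)) \<le> real k - real m"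
    proof -
      have "(\<Sum>i<m. n i) \<le> k - m" using n by (simp add: AA_def)
      then have "real (\<Sum>i<m. n i) \<le> real (k - m)" by (simp only: of_nat_le_iff)
      then show ?thesis using k by (simp add: of_nat_diff)
    qed
    ultimately show ?thesis by (simp add: sum.distrib)
  qed
  moreover have "\<forall>i<m. 0 \<le> c i + real (n i)" using c(2) by (simp add: add_nonneg_nonneg)
  ultimately have "phi (r, n) \<in> Q (real k)" unfolding Q_def by blast
  moreover have "phi (r, n) \<in> Zp"
    using comb_nat_Zp[of n] by (auto simp: phi_def Zp_def real_vec_comp)
  ultimately show "phi (r, n) \<in> Q (real k) \<inter> Zp" by simp
qed

lemma inj_phi: "inj_on phi (F \<times> AA K)"
proof (rule inj_onI, clarify)
  fix r n r' n' assume r: "r \<in> F" and n: "n \<in> AA K" and r': "r' \<in> F" and n': "n' \<in> AA K"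
    and eq: "phi (r, n) = phi (r', n')"
  obtain c where c: "real_vec r = comb c" "\<forall>i<m. 0 \<le> c i \<and> c i < 1" using r by (auto simp: F_def)
  obtain c' where c': "real_vec r' = comb c'" "\<forall>i<m. 0 \<le> c' i \<and> c' i < 1" using r' by (auto simp: F_def)
  have "comb (\<lambda>i. c i + real (n i)) = comb (\<lambda>i. c' i + real (n' i))"
    using eq by (simp add: phi_def c(1) c'(1) comb_add)
  then have e: "i < m \<Longrightarrow> c i + real (n i) = c' i + real (n' i)" for i by (rule comb_inj)
  have fl: "i < m \<Longrightarrow> \<lfloor>c i + real (n i)\<rfloor> = int (n i)" for i
    using c(2) by (simp add: floor_eq_iff)
  have fl': "i < m \<Longrightarrow> \<lfloor>c' i + real (n' i)\<rfloor> = int (n' i)" for i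
    using c'(2) by (simp add: floor_eq_iff)
  have nn: "i < m \<Longrightarrow> n i = n' i" for i using e[of i] fl[of i] fl'[of i] by simp
  have "n = n'"
  proof (rule ext)
    fix i show "n i = n' i" using nn n n' unfolding AA_def by (cases "i < m") auto
  qed
  moreover have "i < m \<Longrightarrow> c i = c' i" for i using e[of i] nn[of i] by simp
  then have "comb c = comb c'" by (rule comb_cong)
  then have "r = r'" using c(1) c'(1) real_vec_inj by metis
  ultimately show "r = r' \<and> n = n'" by simp
qed

lemma count_upper: "card (Q (real k) \<inter> Zp) \<le> card F * ((k + m) choose m)"
proof -
  have "card (Q (real k) \<inter> Zp) \<le> card (phi ` (F \<times> AA k))"
    by (rule card_mono[OF _ upper_incl]) (simp add: finite_F finite_AA)
  also have "\<dots> \<le> card (F \<times> AA k)" by (rule card_image_le) (simp add: finite_F finite_AA)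
  also have "\<dots> = card F * ((k + m) choose m)" by (simp add: card_cartesian_product card_AA')
  finally show ?thesis .
qed

lemma finite_QZ: "finite (Q (real k) \<inter> Zp)"
  using upper_incl by (rule finite_subset) (simp add: finite_F finite_AA)

lemma count_lower: "k \<ge> m \<Longrightarrow> card F * (k choose m) \<le> card (Q (real k) \<inter> Zp)"
proof -
  assume k: "k \<ge> m"
  have "card F * (k choose m) = card (F \<times> AA (k - m))"
    using k by (simp add: card_cartesian_product card_AA')
  also have "\<dots> = card (phi ` (F \<times> AA (k - m)))" by (rule card_image[OF inj_phi, symmetric])
  also have "\<dots> \<le> card (Q (real k) \<inter> Zp)" by (rule card_mono[OF finite_QZ lower_incl[OF k]])
  finally show ?thesis .
qed

end


context latt begin

lemma vol_seq: "(\<lambda>k. real (card (Q (real k) \<inter> Zp)) / real k ^ m) \<longlonglongrightarrow> real (card F) / fact m"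
proof (rule tendsto_sandwich)
  define N where "N = real (card F)"
  have mk: "(\<lambda>k. real m / real k) \<longlonglongrightarrow> 0"
    using tendsto_mult_right_zero[OF lim_inverse_n, of "real m"] by (simp add: divide_inverse)
  have "(\<lambda>k. N / fact m * (1 - real m / real k) ^ m) \<longlonglongrightarrow> N / fact m * (1 - 0) ^ m"
    by (intro tendsto_intros mk)
  then show "(\<lambda>k. N / fact m * (1 - real m / real k) ^ m) \<longlonglongrightarrow> real (card F) / fact m"
    by (simp add: N_def)
  have "(\<lambda>k. N / fact m * (1 + real m / real k) ^ m) \<longlonglongrightarrow> N / fact m * (1 + 0) ^ m"
    by (intro tendsto_intros mk)
  then show "(\<lambda>k. N / fact m * (1 + real m / real k) ^ m) \<longlonglongrightarrow> real (card F) / fact m"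
    by (simp add: N_def)
  have N0: "N \<ge> 0" by (simp add: N_def)
  show "\<forall>\<^sub>F k in sequentially. N / fact m * (1 - real m / real k) ^ m \<le> real (card (Q (real k) \<inter> Zp)) / real k ^ m"
    using eventually_ge_at_top[of "max m 1"]
  proof eventually_elim
    case (elim k)
    then have k: "k \<ge> m" "k > 0" by auto
    have e1: "1 - real m / real k = real (k - m) / real k"
      using k by (simp add: of_nat_diff diff_divide_distrib)
    have "real (k - m) ^ m \<le> fact m * real (k choose m)" using choose_lower_bound k by simp
    then have "N * real (k - m) ^ m \<le> N * (fact m * real (k choose m))" using N0 by (rule mult_left_mono)
    then have "N * real (k - m) ^ m / fact m \<le> N * (fact m * real (k choose m)) / fact m"
      by (rule divide_right_mono) simp
    also have "\<dots> = N * real (k choose m)" by simp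
    also have "\<dots> \<le> real (card (Q (real k) \<inter> Zp))"
      using count_lower[OF k(1)] by (simp add: N_def flip: of_nat_mult)
    finally have c: "N * real (k - m) ^ m / fact m \<le> real (card (Q (real k) \<inter> Zp))" .
    have "N / fact m * (1 - real m / real k) ^ m = (N * real (k - m) ^ m / fact m) / real k ^ m"
      unfolding e1 power_divide by simp
    also have "\<dots> \<le> real (card (Q (real k) \<inter> Zp)) / real k ^ m"
      by (rule divide_right_mono[OF c]) simp
    finally show ?case .
  qed
  show "\<forall>\<^sub>F k in sequentially. real (card (Q (real k) \<inter> Zp)) / real k ^ m \<le> N / fact m * (1 + real m / real k) ^ m"
    using eventually_ge_at_top[of "1::nat"]
  proof eventually_elim
    case (elim k)
    then have k: "k > 0" by auto
    have e1: "1 + real m / real k = real (k + m) / real k"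
      using k by (simp add: add_divide_distrib)
    have "real (card (Q (real k) \<inter> Zp)) \<le> N * real ((k + m) choose m)"
      using count_upper[of k] by (simp add: N_def flip: of_nat_mult)
    also have "\<dots> = N * (fact m * real ((k + m) choose m)) / fact m" by simp
    also have "\<dots> \<le> N * real (k + m) ^ m / fact m"
      by (rule divide_right_mono[OF mult_left_mono[OF choose_upper_bound N0]]) simp
    finally have c: "real (card (Q (real k) \<inter> Zp)) \<le> N * real (k + m) ^ m / fact m" .
    have "real (card (Q (real k) \<inter> Zp)) / real k ^ m \<le> (N * real (k + m) ^ m / fact m) / real k ^ m"
      by (rule divide_right_mono[OF c]) simp
    also have "\<dots> = N / fact m * (1 + real m / real k) ^ m"
      unfolding e1 power_divide by simp
    finally show ?case .
  qed
qed

lemma rel_vol: "rel_volume P = real (card F) / fact m"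
proof -
  have "(\<lambda>k::nat. real (card ((\<lambda>x. real k *\<^sub>R x) ` P \<inter> {x. \<forall>i. x $ i \<in> \<int>})) / real k ^ nat (aff_dim P))
        \<longlonglongrightarrow> real (card F) / fact m"
  proof (rule Lim_transform_eventually[OF vol_seq])
    show "\<forall>\<^sub>F k in sequentially. real (card (Q (real k) \<inter> Zp)) / real k ^ m =
      real (card ((\<lambda>x. real k *\<^sub>R x) ` P \<inter> {x. \<forall>i. x $ i \<in> \<int>})) / real k ^ nat (aff_dim P)"
      using eventually_ge_at_top[of "1::nat"]
      by eventually_elim (simp add: aff_dim_P scaled_P Zp_def)
  qed
  then show ?thesis unfolding rel_volume_def by (rule limI)
qed

end


lemma lookup_kscale: "Poly_Mapping.lookup (kscale c p) w = c * Poly_Mapping.lookup p w"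
  unfolding kscale_def by (simp flip: mult_map_scale_conv_mult add: map.rep_eq when_def)

lemma vs_kscale: "vector_space (kscale :: 'k::field \<Rightarrow> ('n, 'k) mpoly \<Rightarrow> _)"
  by unfold_locales (simp_all add: poly_mapping_eq_iff fun_eq_iff lookup_kscale lookup_add algebra_simps)

interpretation ks: vector_space "kscale :: 'k::field \<Rightarrow> ('n, 'k) mpoly \<Rightarrow> _"
  by (rule vs_kscale)

lemma kdim_eq: "kdim V = ks.dim V" by (simp add: kdim_def)

lemma lookup_tmon: "Poly_Mapping.lookup (tmon u :: ('n, 'k::comm_ring_1) mpoly) w = (if w = u then 1 else 0)"
  by (simp add: tmon_def lookup_single)

lemma indep_crit:
  fixes Bs :: "('n, 'k::field) mpoly set"
  assumes "finite Bs"
    and "\<And>b. b \<in> Bs \<Longrightarrow> \<exists>w. Poly_Mapping.lookup b w = 1 \<and> (\<forall>b'\<in>Bs. b' \<noteq> b \<longrightarrow> Poly_Mapping.lookup b' w = 0)"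
  shows "ks.independent Bs"
  unfolding ks.dependent_finite[OF assms(1)]
proof (clarify)
  fix c v assume v: "v \<in> Bs" and cv: "c v \<noteq> 0" and s: "(\<Sum>v\<in>Bs. kscale (c v) v) = 0"
  obtain w where w: "Poly_Mapping.lookup v w = 1" "\<forall>b'\<in>Bs. b' \<noteq> v \<longrightarrow> Poly_Mapping.lookup b' w = 0"
    using assms(2)[OF v] by blast
  have "0 = Poly_Mapping.lookup (\<Sum>v\<in>Bs. kscale (c v) v) w" using s by simp
  also have "\<dots> = (\<Sum>b\<in>Bs. c b * Poly_Mapping.lookup b w)" by (simp add: lookup_sum lookup_kscale)
  also have "\<dots> = c v * Poly_Mapping.lookup v w + (\<Sum>b\<in>Bs - {v}. c b * Poly_Mapping.lookup b w)"
    using assms(1) v by (simp add: sum.remove)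
  also have "(\<Sum>b\<in>Bs - {v}. c b * Poly_Mapping.lookup b w) = 0"
    using w(2) by (intro sum.neutral) auto
  finally show False using w(1) cv by simp
qed

lemma span_monomials:
  fixes p :: "('n, 'k::field) mpoly"
  assumes "finite M" "Poly_Mapping.keys p \<subseteq> M"
  shows "p \<in> ks.span (tmon ` M)"
proof -
  have "p = (\<Sum>u\<in>M. kscale (Poly_Mapping.lookup p u) (tmon u))"
  proof (rule poly_mapping_eqI)
    fix w
    have "Poly_Mapping.lookup (\<Sum>u\<in>M. kscale (Poly_Mapping.lookup p u) (tmon u)) w
        = (\<Sum>u\<in>M. if w = u then Poly_Mapping.lookup p u else 0)"
      by (simp add: lookup_sum lookup_kscale lookup_tmon if_distrib cong: if_cong)
    also have "\<dots> = Poly_Mapping.lookup p w"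
      using assms by (auto simp: sum.delta in_keys_iff)
    finally show "Poly_Mapping.lookup p w = Poly_Mapping.lookup (\<Sum>u\<in>M. kscale (Poly_Mapping.lookup p u) (tmon u)) w" by simp
  qed
  also have "\<dots> \<in> ks.span (tmon ` M)"
    by (intro ks.span_sum ks.span_scale ks.span_base) auto
  finally show ?thesis .
qed

lemma tmon_inj: "tmon u = (tmon v :: ('n, 'k::field) mpoly) \<longleftrightarrow> u = v"
  unfolding tmon_def by (metis lookup_single_eq lookup_single_not_eq one_neq_zero)

lemma indep_monomials:
  assumes "finite M"
  shows "ks.independent (tmon ` M :: ('n, 'k::field) mpoly set)"
proof (rule indep_crit)
  show "finite (tmon ` M :: ('n, 'k) mpoly set)" using assms by simp
  fix b :: "('n, 'k) mpoly" assume "b \<in> tmon ` M"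
  then obtain u where u: "b = tmon u" by auto
  show "\<exists>w. Poly_Mapping.lookup b w = 1 \<and> (\<forall>b'\<in>tmon ` M. b' \<noteq> b \<longrightarrow> Poly_Mapping.lookup b' w = 0)"
    by (rule exI[of _ u]) (auto simp: u lookup_tmon)
qed

definition Md :: "nat \<Rightarrow> ('n::finite \<Rightarrow>\<^sub>0 nat) set" where "Md d = {u. mdeg u = d}"

lemma finite_Md: "finite (Md d :: ('n::finite \<Rightarrow>\<^sub>0 nat) set)"
proof -
  have "Poly_Mapping.lookup ` (Md d :: ('n \<Rightarrow>\<^sub>0 nat) set) \<subseteq> {f. \<forall>i. (i \<in> UNIV \<longrightarrow> f i \<in> {..d}) \<and> (i \<notin> UNIV \<longrightarrow> f i = 0)}"
  proof (rule subsetI, rule CollectI, intro allI)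
    fix f i assume "f \<in> Poly_Mapping.lookup ` Md d"
    then obtain u where "u \<in> Md d" "f = Poly_Mapping.lookup u" by auto
    have "Poly_Mapping.lookup u i \<le> (\<Sum>i\<in>UNIV. Poly_Mapping.lookup u i)" by (rule member_le_sum) auto
    then show "(i \<in> UNIV \<longrightarrow> f i \<in> {..d}) \<and> (i \<notin> UNIV \<longrightarrow> f i = 0)"
      using \<open>u \<in> Md d\<close> \<open>f = _\<close> by (simp add: Md_def mdeg_def)
  qed
  moreover have "finite {f::'n \<Rightarrow> nat. \<forall>i. (i \<in> UNIV \<longrightarrow> f i \<in> {..d}) \<and> (i \<notin> UNIV \<longrightarrow> f i = 0)}"
    by (rule finite_set_of_finite_funs) auto
  ultimately have "finite (Poly_Mapping.lookup ` (Md d :: ('n \<Rightarrow>\<^sub>0 nat) set))" by (rule finite_subset)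
  moreover have "inj_on Poly_Mapping.lookup (Md d :: ('n \<Rightarrow>\<^sub>0 nat) set)" by (metis inj_onI lookup_inject)
  ultimately show ?thesis using finite_image_iff by blast
qed

lemma Sdeg_keys: "p \<in> Sdeg d \<longleftrightarrow> Poly_Mapping.keys p \<subseteq> Md d"
  by (auto simp: Sdeg_def Md_def)

lemma kdim_Sdeg: "kdim (Sdeg d :: ('n::finite, 'k::field) mpoly set) = card (Md d :: ('n \<Rightarrow>\<^sub>0 nat) set)"
  unfolding kdim_eq
proof (rule ks.dim_unique[of "tmon ` Md d"])
  show "tmon ` Md d \<subseteq> (Sdeg d :: ('n, 'k) mpoly set)"
    by (auto simp: Sdeg_keys tmon_def)
  show "(Sdeg d :: ('n, 'k) mpoly set) \<subseteq> ks.span (tmon ` Md d)"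
    using span_monomials[OF finite_Md] by (auto simp: Sdeg_keys)
  show "ks.independent (tmon ` Md d :: ('n, 'k) mpoly set)" by (rule indep_monomials[OF finite_Md])
  show "card (tmon ` Md d :: ('n, 'k) mpoly set) = card (Md d :: ('n \<Rightarrow>\<^sub>0 nat) set)"
    by (rule card_image) (auto simp: inj_on_def tmon_inj)
qed


definition vecm :: "('n::finite \<Rightarrow>\<^sub>0 nat) \<Rightarrow> int^'n" where
  "vecm u = (\<chi> i. int (Poly_Mapping.lookup u i))"

lemma vecm_add: "vecm (u + v) = vecm u + vecm v"
  by (simp add: vecm_def vec_eq_iff lookup_add)

lemma lookup_pos_part: "Poly_Mapping.lookup (pos_part a) = (\<lambda>i. nat (a $ i))"
  unfolding pos_part_def by (rule lookup_Abs_poly_mapping) simp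

lemma lookup_neg_part: "Poly_Mapping.lookup (neg_part a) = (\<lambda>i. nat (- (a $ i)))"
  unfolding neg_part_def by (rule lookup_Abs_poly_mapping) simp

lemma vecm_pos_neg: "vecm (pos_part a) - vecm (neg_part a) = a"
  by (simp add: vecm_def vec_eq_iff lookup_pos_part lookup_neg_part)

lemma poly_sum_singles: "p = (\<Sum>u\<in>Poly_Mapping.keys p. Poly_Mapping.single u (Poly_Mapping.lookup p u))"
proof (rule poly_mapping_eqI)
  fix w
  have "Poly_Mapping.lookup (\<Sum>u\<in>Poly_Mapping.keys p. Poly_Mapping.single u (Poly_Mapping.lookup p u)) w
      = (\<Sum>u\<in>Poly_Mapping.keys p. if u = w then Poly_Mapping.lookup p u else 0)"
    by (simp add: lookup_sum lookup_single when_def)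
  also have "\<dots> = Poly_Mapping.lookup p w" by (simp add: sum.delta in_keys_iff)
  finally show "Poly_Mapping.lookup p w = Poly_Mapping.lookup (\<Sum>u\<in>Poly_Mapping.keys p. Poly_Mapping.single u (Poly_Mapping.lookup p u)) w" by simp
qed

lemma mult_tmon: "q * tmon e = (\<Sum>u\<in>Poly_Mapping.keys q. Poly_Mapping.single (u + e) (Poly_Mapping.lookup q u))"
proof -
  have "q * tmon e = (\<Sum>u\<in>Poly_Mapping.keys q. Poly_Mapping.single u (Poly_Mapping.lookup q u)) * tmon e"
    by (subst poly_sum_singles[of q]) (rule refl)
  also have "\<dots> = (\<Sum>u\<in>Poly_Mapping.keys q. Poly_Mapping.single u (Poly_Mapping.lookup q u) * tmon e)"
    by (rule sum_distrib_right)
  also have "\<dots> = (\<Sum>u\<in>Poly_Mapping.keys q. Poly_Mapping.single (u + e) (Poly_Mapping.lookup q u))"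
    by (simp add: tmon_def mult_single)
  finally show ?thesis .
qed

lemma tmon_add: "tmon (u + v) = (tmon u * tmon v :: ('n, 'k::comm_ring_1) mpoly)"
  by (simp add: tmon_def mult_single)

context latt begin

definition csum :: "('n \<Rightarrow>\<^sub>0 nat) \<Rightarrow> ('n, 'k::field) mpoly \<Rightarrow> 'k" where
  "csum w p = (\<Sum>u\<in>Poly_Mapping.keys p. if vecm u - vecm w \<in> L then Poly_Mapping.lookup p u else 0)"

lemma csum_superset:
  assumes "finite W" "Poly_Mapping.keys p \<subseteq> W"
  shows "csum w p = (\<Sum>u\<in>W. if vecm u - vecm w \<in> L then Poly_Mapping.lookup p u else 0)"
  unfolding csum_def by (rule sum.mono_neutral_left) (use assms in \<open>auto simp: in_keys_iff\<close>)

lemma csum_add: "csum w (p + q) = csum w p + csum w q"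
proof -
  define W where "W = Poly_Mapping.keys p \<union> Poly_Mapping.keys q"
  have fW: "finite W" by (simp add: W_def)
  have "csum w (p + q) = (\<Sum>u\<in>W. if vecm u - vecm w \<in> L then Poly_Mapping.lookup (p + q) u else 0)"
    using keys_add[of p q] by (intro csum_superset fW) (auto simp: W_def)
  also have "\<dots> = (\<Sum>u\<in>W. (if vecm u - vecm w \<in> L then Poly_Mapping.lookup p u else 0)
      + (if vecm u - vecm w \<in> L then Poly_Mapping.lookup q u else 0))"
    by (rule sum.cong) (auto simp: lookup_add)
  also have "\<dots> = csum w p + csum w q"
    by (simp add: sum.distrib csum_superset[OF fW] W_def)
  finally show ?thesis .
qed

lemma csum_uminus: "csum w (- p) = - csum w p"
  by (simp add: csum_def sum_negf[symmetric] if_distrib cong: if_cong)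

lemma csum_diff: "csum w (p - q) = csum w p - csum w q"
  using csum_add[of w p "- q"] csum_uminus[of w q] by simp

lemma csum_zero: "csum w 0 = 0" by (simp add: csum_def)

lemma csum_sum: "finite A \<Longrightarrow> csum w (sum f A) = (\<Sum>a\<in>A. csum w (f a))"
  by (induction A rule: finite_induct) (simp_all add: csum_zero csum_add)

lemma csum_single: "csum w (Poly_Mapping.single v c) = (if vecm v - vecm w \<in> L then c else 0)"
proof -
  have "csum w (Poly_Mapping.single v c) = (\<Sum>u\<in>{v}. if vecm u - vecm w \<in> L then Poly_Mapping.lookup (Poly_Mapping.single v c) u else 0)"
    by (rule csum_superset) auto
  then show ?thesis by simp
qed

lemma csum_mult_tmon: "csum w (q * tmon e) = (\<Sum>u\<in>Poly_Mapping.keys q. if vecm (u + e) - vecm w \<in> L then Poly_Mapping.lookup q u else 0)"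
  by (simp add: mult_tmon csum_sum csum_single)

lemma csum_gen: "a \<in> L \<Longrightarrow> csum w (q * (tmon (pos_part a) - tmon (neg_part a))) = 0"
proof -
  assume a: "a \<in> L"
  have eq: "vecm (u + pos_part a) - vecm w = (vecm (u + neg_part a) - vecm w) + a" for u
    using vecm_pos_neg[of a] by (simp add: vecm_add algebra_simps)
  have iff: "vecm (u + pos_part a) - vecm w \<in> L \<longleftrightarrow> vecm (u + neg_part a) - vecm w \<in> L" for u
    using L_add[OF _ a] L_diff[OF _ a] eq[of u] by (metis add_diff_cancel_right')
  show ?thesis
    by (simp add: right_diff_distrib csum_diff csum_mult_tmon iff)
qed

lemma csum_ideal: "p \<in> lattice_ideal L \<Longrightarrow> csum w (p :: ('n, 'k::field) mpoly) = 0"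
proof -
  assume "p \<in> lattice_ideal L"
  then obtain G q where G: "finite G" "G \<subseteq> {tmon (pos_part a) - tmon (neg_part a) | a. a \<in> L}"
    and p: "p = (\<Sum>g\<in>G. q g * g)"
    unfolding lattice_ideal_def ideal_gen_def by auto
  have "csum w p = (\<Sum>g\<in>G. csum w (q g * g))" using p G(1) by (simp add: csum_sum)
  also have "\<dots> = 0"
  proof (rule sum.neutral, rule ballI)
    fix g assume "g \<in> G"
    then obtain a where "a \<in> L" "g = tmon (pos_part a) - tmon (neg_part a)" using G(2) by auto
    then show "csum w (q g * g) = 0" using csum_gen by simp
  qed
  finally show ?thesis .
qed

lemma binom_in_ideal:
  assumes "vecm u - vecm v \<in> L"
  shows "tmon u - tmon v \<in> (lattice_ideal L :: ('n, 'k::field) mpoly set)"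
proof -
  define a where "a = vecm u - vecm v"
  define w where "w = Abs_poly_mapping (\<lambda>i. min (Poly_Mapping.lookup u i) (Poly_Mapping.lookup v i))"
  have lw: "Poly_Mapping.lookup w = (\<lambda>i. min (Poly_Mapping.lookup u i) (Poly_Mapping.lookup v i))"
    unfolding w_def by (rule lookup_Abs_poly_mapping) simp
  have u: "u = w + pos_part a"
    by (rule poly_mapping_eqI) (simp add: lookup_add lw lookup_pos_part a_def vecm_def)
  have v: "v = w + neg_part a"
    by (rule poly_mapping_eqI) (simp add: lookup_add lw lookup_neg_part a_def vecm_def)
  have "tmon u - tmon v = tmon w * (tmon (pos_part a) - tmon (neg_part a) :: ('n, 'k) mpoly)"
    by (simp add: u v tmon_add right_diff_distrib)
  moreover have "tmon (pos_part a) - tmon (neg_part a) \<in> {tmon (pos_part a) - tmon (neg_part a) :: ('n, 'k) mpoly | a. a \<in> L}"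
    using assms a_def by auto
  ultimately show ?thesis unfolding lattice_ideal_def ideal_gen_def
    by (intro CollectI exI[of _ "{tmon (pos_part a) - tmon (neg_part a)}"] exI[of _ "\<lambda>_. tmon w"]) auto
qed

end


context latt begin

definition rho :: "nat \<Rightarrow> ('n \<Rightarrow>\<^sub>0 nat) \<Rightarrow> ('n \<Rightarrow>\<^sub>0 nat)" where
  "rho d u = (SOME v. v \<in> Md d \<and> vecm v - vecm u \<in> L)"

lemma rho_in: "u \<in> Md d \<Longrightarrow> rho d u \<in> Md d \<and> vecm (rho d u) - vecm u \<in> L"
  unfolding rho_def by (rule someI[of _ u]) (simp add: L_zero)

lemma rho_eq: "vecm u - vecm u' \<in> L \<Longrightarrow> rho d u = rho d u'"
proof -
  assume h: "vecm u - vecm u' \<in> L"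
  have "(\<lambda>v. v \<in> Md d \<and> vecm v - vecm u \<in> L) = (\<lambda>v. v \<in> Md d \<and> vecm v - vecm u' \<in> L)"
  proof (rule ext)
    fix v
    have "vecm v - vecm u' = (vecm v - vecm u) + (vecm u - vecm u')" by simp
    moreover have "vecm v - vecm u = (vecm v - vecm u') - (vecm u - vecm u')" by simp
    ultimately show "(v \<in> Md d \<and> vecm v - vecm u \<in> L) = (v \<in> Md d \<and> vecm v - vecm u' \<in> L)"
      using h L_add L_diff by metis
  qed
  then show ?thesis unfolding rho_def by simp
qed

lemma rho_iff: "u \<in> Md d \<Longrightarrow> u' \<in> Md d \<Longrightarrow> rho d u = rho d u' \<longleftrightarrow> vecm u - vecm u' \<in> L"
proof
  assume u: "u \<in> Md d" "u' \<in> Md d" and e: "rho d u = rho d u'"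
  have "vecm u - vecm u' = (vecm (rho d u') - vecm u') - (vecm (rho d u) - vecm u)"
    using e by simp
  then show "vecm u - vecm u' \<in> L" using rho_in[OF u(1)] rho_in[OF u(2)] L_diff by metis
qed (rule rho_eq)

lemma rho_idem: "u \<in> Md d \<Longrightarrow> rho d (rho d u) = rho d u"
  using rho_in[of u d] by (auto intro: rho_eq)

definition R :: "nat \<Rightarrow> ('n \<Rightarrow>\<^sub>0 nat) set" where "R d = rho d ` Md d"
definition NR :: "nat \<Rightarrow> ('n \<Rightarrow>\<^sub>0 nat) set" where "NR d = Md d - R d"

lemma R_sub: "R d \<subseteq> Md d" using rho_in by (auto simp: R_def)

lemma R_fix: "w \<in> R d \<Longrightarrow> rho d w = w"
  using rho_idem by (auto simp: R_def)

lemma NR_rho: "u \<in> NR d \<Longrightarrow> rho d u \<noteq> u"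
  unfolding NR_def R_def by (metis DiffD1 DiffD2 image_eqI)

lemma NR_rho_R: "u \<in> NR d \<Longrightarrow> rho d u \<in> R d"
  by (auto simp: NR_def R_def)

definition fb :: "nat \<Rightarrow> ('n \<Rightarrow>\<^sub>0 nat) \<Rightarrow> ('n, 'k::field) mpoly" where
  "fb d u = tmon u - tmon (rho d u)"

lemma lookup_fb: "Poly_Mapping.lookup (fb d u :: ('n, 'k::field) mpoly) w = (if w = u then 1 else 0) - (if w = rho d u then 1 else 0)"
  by (simp add: fb_def lookup_minus lookup_tmon)

lemma fb_Sdeg: "u \<in> Md d \<Longrightarrow> (fb d u :: ('n, 'k::field) mpoly) \<in> Sdeg d"
  unfolding Sdeg_keys
proof
  fix w assume u: "u \<in> Md d" and "w \<in> Poly_Mapping.keys (fb d u :: ('n, 'k) mpoly)"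
  then have "Poly_Mapping.lookup (fb d u :: ('n, 'k) mpoly) w \<noteq> 0" by (simp add: in_keys_iff)
  then have "w = u \<or> w = rho d u" by (auto simp: lookup_fb split: if_splits)
  then show "w \<in> Md d" using u rho_in[OF u] by auto
qed

lemma fb_I: "u \<in> Md d \<Longrightarrow> (fb d u :: ('n, 'k::field) mpoly) \<in> lattice_ideal L"
proof -
  assume u: "u \<in> Md d"
  have "vecm u - vecm (rho d u) \<in> L"
    using L_uminus[OF conjunct2[OF rho_in[OF u]]] by simp
  then show ?thesis unfolding fb_def by (rule binom_in_ideal)
qed

lemma finite_NR: "finite (NR d)" unfolding NR_def by (rule finite_Diff[OF finite_Md])

lemma inj_fb: "inj_on (fb d :: _ \<Rightarrow> ('n, 'k::field) mpoly) (NR d)"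
proof (rule inj_onI)
  fix u u' assume u: "u \<in> NR d" "u' \<in> NR d" and e: "(fb d u :: ('n, 'k) mpoly) = fb d u'"
  have "Poly_Mapping.lookup (fb d u :: ('n, 'k) mpoly) u = 1" using NR_rho[OF u(1)] by (simp add: lookup_fb)
  then have "Poly_Mapping.lookup (fb d u' :: ('n, 'k) mpoly) u = 1" using e by simp
  moreover have "u \<noteq> rho d u'" using NR_rho_R[OF u(2)] u(1) by (auto simp: NR_def)
  ultimately show "u = u'" by (simp add: lookup_fb split: if_splits)
qed

lemma span_fb:
  assumes p: "p \<in> lattice_ideal L \<inter> Sdeg d"
  shows "(p :: ('n, 'k::field) mpoly) \<in> ks.span (fb d ` NR d)"
proof -
  have kp: "Poly_Mapping.keys p \<subseteq> Md d" using p by (simp add: Sdeg_keys)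
  have pI: "p \<in> lattice_ideal L" using p by simp
  define q where "q = (\<Sum>u\<in>NR d. kscale (Poly_Mapping.lookup p u) (fb d u :: ('n, 'k) mpoly))"
  have lq: "Poly_Mapping.lookup q w = (\<Sum>u\<in>NR d. if w = u then Poly_Mapping.lookup p u else 0)
       - (\<Sum>u\<in>NR d. if w = rho d u then Poly_Mapping.lookup p u else 0)" for w
  proof -
    have "Poly_Mapping.lookup q w = (\<Sum>u\<in>NR d. Poly_Mapping.lookup p u * ((if w = u then 1 else 0) - (if w = rho d u then 1 else 0)))"
      by (simp add: q_def lookup_sum lookup_kscale lookup_fb)
    also have "\<dots> = (\<Sum>u\<in>NR d. (if w = u then Poly_Mapping.lookup p u else 0) - (if w = rho d u then Poly_Mapping.lookup p u else 0))"
      by (rule sum.cong) auto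
    finally show ?thesis by (simp add: sum_subtractf)
  qed
  have "p = q"
  proof (rule poly_mapping_eqI)
    fix w
    show "Poly_Mapping.lookup p w = Poly_Mapping.lookup q w"
    proof (cases "w \<in> NR d")
      case True
      have "(\<Sum>u\<in>NR d. if w = rho d u then Poly_Mapping.lookup p u else 0) = 0"
        using True NR_rho_R by (intro sum.neutral) (auto simp: NR_def)
      then show ?thesis using True finite_NR by (simp add: lq sum.delta)
    next
      case False
      show ?thesis
      proof (cases "w \<in> R d")
        case wR: True
        have wM: "w \<in> Md d" using wR R_sub by auto
        have cs: "csum w p = 0" by (rule csum_ideal[OF pI])
        have cond: "u \<in> Md d \<Longrightarrow> (vecm u - vecm w \<in> L) = (rho d u = w)" for u
          using rho_iff[of u d w] wM R_fix[OF wR] by simp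
        have "0 = (\<Sum>u\<in>Md d. if vecm u - vecm w \<in> L then Poly_Mapping.lookup p u else 0)"
          using cs csum_superset[OF finite_Md kp] by simp
        also have "\<dots> = (\<Sum>u\<in>Md d. if rho d u = w then Poly_Mapping.lookup p u else 0)"
          by (rule sum.cong) (auto simp: cond)
        also have "\<dots> = (\<Sum>u\<in>NR d. if rho d u = w then Poly_Mapping.lookup p u else 0)
             + (\<Sum>u\<in>R d. if rho d u = w then Poly_Mapping.lookup p u else 0)"
        proof -
          have "Md d = NR d \<union> R d" "NR d \<inter> R d = {}" using R_sub by (auto simp: NR_def)
          then show ?thesis using finite_NR finite_subset[OF R_sub finite_Md]
            by (simp add: sum.union_disjoint)
        qed
        also have "(\<Sum>u\<in>R d. if rho d u = w then Poly_Mapping.lookup p u else 0)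
             = (\<Sum>u\<in>R d. if u = w then Poly_Mapping.lookup p u else 0)"
          by (rule sum.cong) (auto simp: R_fix)
        also have "\<dots> = Poly_Mapping.lookup p w"
          using wR finite_subset[OF R_sub finite_Md] by (simp add: sum.delta')
        finally have e: "(\<Sum>u\<in>NR d. if rho d u = w then Poly_Mapping.lookup p u else 0) = - Poly_Mapping.lookup p w"
          by (simp add: eq_neg_iff_add_eq_0)
        have "(\<Sum>u\<in>NR d. if w = u then Poly_Mapping.lookup p u else 0) = 0"
          using False by (intro sum.neutral) auto
        moreover have "(\<Sum>u\<in>NR d. if w = rho d u then Poly_Mapping.lookup p u else 0) = - Poly_Mapping.lookup p w"
          using e by (simp add: eq_commute[of w])
        ultimately show ?thesis by (simp add: lq)
      next
        case wR: False
        then have "w \<notin> Md d" using False by (auto simp: NR_def)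
        then have "Poly_Mapping.lookup p w = 0" using kp by (auto simp: in_keys_iff)
        moreover have "(\<Sum>u\<in>NR d. if w = u then Poly_Mapping.lookup p u else 0) = 0"
          using False by (intro sum.neutral) auto
        moreover have "(\<Sum>u\<in>NR d. if w = rho d u then Poly_Mapping.lookup p u else 0) = 0"
          using wR NR_rho_R by (intro sum.neutral) auto
        ultimately show ?thesis by (simp add: lq)
      qed
    qed
  qed
  also have "q \<in> ks.span (fb d ` NR d)"
    unfolding q_def by (intro ks.span_sum ks.span_scale ks.span_base) auto
  finally show ?thesis .
qed

lemma indep_fb: "ks.independent (fb d ` NR d :: ('n, 'k::field) mpoly set)"
proof (rule indep_crit)
  show "finite (fb d ` NR d :: ('n, 'k) mpoly set)" using finite_NR by simp
  fix b :: "('n, 'k) mpoly" assume "b \<in> fb d ` NR d"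
  then obtain u where u: "u \<in> NR d" "b = fb d u" by auto
  show "\<exists>w. Poly_Mapping.lookup b w = 1 \<and> (\<forall>b'\<in>fb d ` NR d. b' \<noteq> b \<longrightarrow> Poly_Mapping.lookup b' w = 0)"
  proof (rule exI[of _ u], intro conjI ballI impI)
    show "Poly_Mapping.lookup b u = 1" using u NR_rho[OF u(1)] by (simp add: lookup_fb)
    fix b' :: "('n, 'k) mpoly" assume "b' \<in> fb d ` NR d" "b' \<noteq> b"
    then obtain u' where u': "u' \<in> NR d" "b' = fb d u'" "u' \<noteq> u" using u by auto
    have "u \<noteq> rho d u'" using NR_rho_R[OF u'(1)] u(1) by (auto simp: NR_def)
    then show "Poly_Mapping.lookup b' u = 0" using u' by (simp add: lookup_fb)
  qed
qed

lemma kdim_I: "kdim (lattice_ideal L \<inter> Sdeg d :: ('n, 'k::field) mpoly set) = card (NR d)"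
  unfolding kdim_eq
proof (rule ks.dim_unique[of "fb d ` NR d"])
  show "(fb d ` NR d :: ('n, 'k) mpoly set) \<subseteq> lattice_ideal L \<inter> Sdeg d"
    using fb_I fb_Sdeg by (auto simp: NR_def)
  show "(lattice_ideal L \<inter> Sdeg d :: ('n, 'k) mpoly set) \<subseteq> ks.span (fb d ` NR d)"
    using span_fb by blast
  show "ks.independent (fb d ` NR d :: ('n, 'k) mpoly set)" by (rule indep_fb)
  show "card (fb d ` NR d :: ('n, 'k) mpoly set) = card (NR d)" by (rule card_image[OF inj_fb])
qed

lemma hilbert_R: "hilbert_fun (lattice_ideal L :: ('n, 'k::field) mpoly set) d = card (R d)"
proof -
  have "card (NR d) = card (Md d :: ('n \<Rightarrow>\<^sub>0 nat) set) - card (R d)"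
    unfolding NR_def by (rule card_Diff_subset) (use finite_subset[OF R_sub finite_Md] R_sub in auto)
  moreover have "card (R d) \<le> card (Md d :: ('n \<Rightarrow>\<^sub>0 nat) set)" by (rule card_mono[OF finite_Md R_sub])
  ultimately show ?thesis unfolding hilbert_fun_def by (simp add: kdim_Sdeg kdim_I)
qed

end


lemma card_image_cong:
  assumes "\<And>u v. u \<in> A \<Longrightarrow> v \<in> A \<Longrightarrow> f u = f v \<longleftrightarrow> g u = g v"
  shows "card (f ` A) = card (g ` A)"
proof -
  define h where "h y = g (SOME u. u \<in> A \<and> f u = y)" for y
  have hf: "u \<in> A \<Longrightarrow> h (f u) = g u" for u
  proof -
    assume u: "u \<in> A"
    have "(SOME v. v \<in> A \<and> f v = f u) \<in> A \<and> f (SOME v. v \<in> A \<and> f v = f u) = f u"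
      by (rule someI[of _ u]) (use u in auto)
    then show ?thesis using assms u by (auto simp: h_def)
  qed
  have "inj_on h (f ` A)"
  proof (rule inj_onI)
    fix x y assume "x \<in> f ` A" "y \<in> f ` A" "h x = h y"
    then obtain u v where "u \<in> A" "v \<in> A" "x = f u" "y = f v" "g u = g v" using hf by auto
    then show "x = y" using assms by auto
  qed
  moreover have "h ` f ` A = g ` A" using hf by (auto simp: image_image)
  ultimately show ?thesis by (metis card_image)
qed

context latt begin

definition e0 :: "int^'n" where "e0 = (\<chi> j. if j = undefined then 1 else 0)"

definition cf :: "int^'n \<Rightarrow> nat \<Rightarrow> real" where "cf x = (SOME c. real_vec x = comb c)"

definition fr :: "int^'n \<Rightarrow> int^'n" where
  "fr x = x - (\<Sum>i<m. \<lfloor>cf x i\<rfloor> *s \<alpha> i)"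

lemma cf: "real_vec x \<in> H \<Longrightarrow> real_vec x = comb (cf x)"
  unfolding cf_def using H_comb by (metis (mono_tags) someI_ex)

lemma frac_bounds: "0 \<le> c - real_of_int \<lfloor>c\<rfloor> \<and> c - real_of_int \<lfloor>c\<rfloor> < (1::real)"
  using of_int_floor_le[of c] real_of_int_floor_gt_diff_one[of c] by linarith

lemma fr_F: "real_vec x \<in> H \<Longrightarrow> fr x \<in> F"
proof -
  assume x: "real_vec x \<in> H"
  have "real_vec (fr x) = comb (\<lambda>i. cf x i - real_of_int \<lfloor>cf x i\<rfloor>)"
    unfolding fr_def by (simp add: real_vec_diff real_vec_lincomb comb_diff cf[OF x])
  then show ?thesis unfolding F_def using frac_bounds by blast
qed

lemma fr_L: "x - fr x \<in> L"
  unfolding fr_def by (simp add: comb_lincomb_in_L)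

lemma F_H: "r \<in> F \<Longrightarrow> real_vec r \<in> H"
  unfolding F_def using comb_H by auto

lemma F_unique: "r \<in> F \<Longrightarrow> r' \<in> F \<Longrightarrow> r - r' \<in> L \<Longrightarrow> r = r'"
proof -
  assume r: "r \<in> F" and r': "r' \<in> F" and l: "r - r' \<in> L"
  obtain c where c: "real_vec r = comb c" "\<forall>i<m. 0 \<le> c i \<and> c i < 1" using r by (auto simp: F_def)
  obtain c' where c': "real_vec r' = comb c'" "\<forall>i<m. 0 \<le> c' i \<and> c' i < 1" using r' by (auto simp: F_def)
  obtain n where n: "r - r' = (\<Sum>i<m. n i *s \<alpha> i)" using l by (auto simp: L_eq)
  have "comb (\<lambda>i. c i - c' i) = comb (\<lambda>i. real_of_int (n i))"
    using arg_cong[OF n, of real_vec] by (simp add: real_vec_diff real_vec_lincomb c(1) c'(1) comb_diff)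
  then have e: "i < m \<Longrightarrow> c i - c' i = real_of_int (n i)" for i by (rule comb_inj)
  have "i < m \<Longrightarrow> n i = 0" for i
  proof -
    assume i: "i < m"
    have "- 1 < real_of_int (n i)" "real_of_int (n i) < 1" using e[OF i] c(2) c'(2) i by force+
    then show "n i = 0" by linarith
  qed
  then have "r - r' = 0" unfolding n by (simp add: vec_eq_iff)
  then show ?thesis by simp
qed

definition G :: "nat \<Rightarrow> ('n \<Rightarrow>\<^sub>0 nat) \<Rightarrow> int^'n" where
  "G d u = fr (vecm u - int d *s e0)"

lemma sum_real_vec: "(\<Sum>j\<in>UNIV. real_vec x $ j) = real_of_int (\<Sum>j\<in>UNIV. x $ j)"
  by (simp add: real_vec_comp)

lemma real_vec_uminus: "real_vec (- a) = - real_vec a"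
  by (simp add: real_vec_def vec_eq_iff)

lemma sum_e0: "(\<Sum>j\<in>UNIV. e0 $ j) = 1"
  by (simp add: e0_def)

lemma mdeg_vecm: "(\<Sum>j\<in>UNIV. vecm u $ j) = int (mdeg u)"
  by (simp add: vecm_def mdeg_def)

lemma xH: "u \<in> Md d \<Longrightarrow> real_vec (vecm u - int d *s e0) \<in> H"
proof -
  assume u: "u \<in> Md d"
  have "(\<Sum>j\<in>UNIV. (vecm u - int d *s e0) $ j) = int (mdeg u) - int d * (\<Sum>j\<in>UNIV. e0 $ j)"
    by (simp add: sum_subtractf mdeg_vecm sum_distrib_left)
  also have "\<dots> = 0" using u by (simp add: Md_def sum_e0)
  finally show ?thesis unfolding H_def by (simp only: mem_Collect_eq sum_real_vec)
qed

lemma G_F: "u \<in> Md d \<Longrightarrow> G d u \<in> F"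
  unfolding G_def by (rule fr_F[OF xH])

lemma G_iff: "u \<in> Md d \<Longrightarrow> v \<in> Md d \<Longrightarrow> G d u = G d v \<longleftrightarrow> vecm u - vecm v \<in> L"
proof
  assume u: "u \<in> Md d" and v: "v \<in> Md d"
  define xu where "xu = vecm u - int d *s e0"
  define xv where "xv = vecm v - int d *s e0"
  have d: "xu - xv = vecm u - vecm v" by (simp add: xu_def xv_def)
  {
    assume "G d u = G d v"
    then have "xu - xv = (xu - fr xu) - (xv - fr xv)" by (simp add: G_def xu_def xv_def)
    then show "vecm u - vecm v \<in> L" using d fr_L L_diff by metis
  next
    assume l: "vecm u - vecm v \<in> L"
    have "G d u - G d v = (xu - xv) - (xu - fr xu) + (xv - fr xv)"
      by (simp add: G_def xu_def xv_def)
    then have "G d u - G d v \<in> L" using d l fr_L L_diff L_add by metis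
    then show "G d u = G d v" using F_unique G_F u v by blast
  }
qed

lemma card_R_G: "card (R d) = card (G d ` Md d)"
  unfolding R_def by (rule card_image_cong) (simp add: rho_iff G_iff)

definition bnd :: real where "bnd = real_of_int (\<Sum>j\<in>UNIV. \<Sum>i<m. \<bar>\<alpha> i $ j\<bar>)"

lemma comb_bound: "\<forall>i<m. 0 \<le> c i \<and> c i < 1 \<Longrightarrow> \<bar>comb c $ j\<bar> \<le> bnd"
proof -
  assume c: "\<forall>i<m. 0 \<le> c i \<and> c i < 1"
  have "\<bar>comb c $ j\<bar> = \<bar>\<Sum>i<m. c i * real_of_int (\<alpha> i $ j)\<bar>" by (simp add: comb_comp)
  also have "\<dots> \<le> (\<Sum>i<m. \<bar>c i * real_of_int (\<alpha> i $ j)\<bar>)" by (rule sum_abs)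
  also have "\<dots> \<le> (\<Sum>i<m. real_of_int \<bar>\<alpha> i $ j\<bar>)"
    by (rule sum_mono) (use c in \<open>auto simp: abs_mult intro!: mult_left_le_one_le\<close>)
  also have "\<dots> \<le> bnd"
  proof -
    have "(\<Sum>i<m. \<bar>\<alpha> i $ j\<bar>) \<le> (\<Sum>j\<in>UNIV. \<Sum>i<m. \<bar>\<alpha> i $ j\<bar>)"
      by (rule member_le_sum[of j UNIV "\<lambda>j. \<Sum>i<m. \<bar>\<alpha> i $ j\<bar>"]) (auto intro: sum_nonneg)
    then show ?thesis unfolding bnd_def by (simp flip: of_int_sum of_int_abs)
  qed
  finally show ?thesis .
qed

lemma L_sum0: "l \<in> L \<Longrightarrow> (\<Sum>j\<in>UNIV. l $ j) = 0"
  using homL by (simp add: homogeneous_lattice_def)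

lemma G_surj:
  assumes d: "real d \<ge> real CARD('n) * bnd" and r: "r \<in> F"
  shows "r \<in> G d ` Md d"
proof -
  define s where "s = real CARD('n)"
  have s0: "s > 0" by (simp add: s_def)
  define y where "y = real_vec (r + int d *s e0) - (real d / s) *\<^sub>R (\<chi> j. 1)"
  have "(\<Sum>j\<in>UNIV. y $ j) = 0"
  proof -
    have sr: "(\<Sum>j\<in>UNIV. real_vec r $ j) = 0" using F_H[OF r] by (simp add: H_def)
    have "(\<Sum>j\<in>UNIV. y $ j) = (\<Sum>j\<in>UNIV. real_vec r $ j) + real d * (\<Sum>j\<in>UNIV. real_of_int (e0 $ j)) - real d / s * s"
      by (simp add: y_def real_vec_comp sum.distrib sum_subtractf sum_distrib_left s_def)
    also have "\<dots> = 0" using sr s0 by (simp add: sum_e0 flip: of_int_sum)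
    finally show ?thesis .
  qed
  then have "y \<in> H" by (simp add: H_def)
  then obtain c where c: "y = comb c" using H_comb by blast
  define l where "l = - (\<Sum>i<m. \<lfloor>c i\<rfloor> *s \<alpha> i)"
  have lL: "l \<in> L" unfolding l_def by (rule L_uminus[OF comb_lincomb_in_L])
  define z where "z = r + int d *s e0 + l"
  have rl: "real_vec l = - comb (\<lambda>i. real_of_int \<lfloor>c i\<rfloor>)"
    by (simp add: l_def real_vec_uminus real_vec_lincomb)
  have ry: "real_vec (r + int d *s e0) = comb c + (real d / s) *\<^sub>R (\<chi> j. 1)"
    using c unfolding y_def by (metis diff_add_cancel)
  have rz: "real_vec z = comb (\<lambda>i. c i - real_of_int \<lfloor>c i\<rfloor>) + (real d / s) *\<^sub>R (\<chi> j. 1)"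
    unfolding z_def real_vec_add[of "r + int d *s e0" l] ry rl comb_diff by simp
  have zpos: "z $ j \<ge> 0" for j
  proof -
    have "\<bar>comb (\<lambda>i. c i - real_of_int \<lfloor>c i\<rfloor>) $ j\<bar> \<le> bnd" using frac_bounds by (intro comb_bound) blast
    moreover have "bnd \<le> real d / s" using d s0 by (simp add: s_def field_simps)
    ultimately have "real_vec z $ j \<ge> 0" using rz by simp
    then show ?thesis by (simp add: real_vec_comp)
  qed
  define u where "u = Abs_poly_mapping (\<lambda>j. nat (z $ j))"
  have lu: "Poly_Mapping.lookup u = (\<lambda>j. nat (z $ j))"
    unfolding u_def by (rule lookup_Abs_poly_mapping) simp
  have vu: "vecm u = z" using zpos by (simp add: vecm_def lu vec_eq_iff)
  have "int (mdeg u) = (\<Sum>j\<in>UNIV. z $ j)" using mdeg_vecm[of u] vu by simp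
  also have "\<dots> = (\<Sum>j\<in>UNIV. r $ j) + int d * (\<Sum>j\<in>UNIV. e0 $ j) + (\<Sum>j\<in>UNIV. l $ j)"
    by (simp add: z_def sum.distrib sum_distrib_left)
  also have "\<dots> = int d"
  proof -
    have "(\<Sum>j\<in>UNIV. r $ j) = 0" using F_H[OF r] by (simp add: H_def real_vec_comp flip: of_int_sum)
    then show ?thesis using L_sum0[OF lL] sum_e0 by simp
  qed
  finally have uM: "u \<in> Md d" by (simp add: Md_def)
  have "G d u = fr (r + l)" by (simp add: G_def vu z_def)
  moreover have "r + l \<in> F \<longrightarrow> True" by simp
  have "real_vec (r + l) \<in> H"
    unfolding real_vec_add rl by (intro subspace_add[OF subspace_H] subspace_neg[OF subspace_H] F_H[OF r] comb_H)
  then have "fr (r + l) \<in> F" by (rule fr_F)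
  moreover have "r - fr (r + l) \<in> L"
  proof -
    have "r - fr (r + l) = ((r + l) - fr (r + l)) - l" by simp
    then show ?thesis using fr_L lL L_diff by metis
  qed
  ultimately have "G d u = r" using F_unique r by metis
  then show ?thesis using uM by blast
qed

lemma hilbert_eventually: "\<forall>\<^sub>F d in sequentially. hilbert_fun (lattice_ideal L :: ('n, 'k::field) mpoly set) d = card F"
proof -
  obtain D :: nat where D: "real D \<ge> real CARD('n) * bnd" using real_arch_simple by blast
  show ?thesis using eventually_ge_at_top[of D]
  proof eventually_elim
    case (elim d)
    then have d: "real d \<ge> real CARD('n) * bnd" using D by linarith
    have "G d ` Md d = F" using G_F G_surj[OF d] by auto
    have "hilbert_fun (lattice_ideal L :: ('n, 'k) mpoly set) d = card (R d)" by (rule hilbert_R)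
    also have "\<dots> = card (G d ` Md d)" by (rule card_R_G)
    also have "\<dots> = card F" using \<open>G d ` Md d = F\<close> by simp
    finally show ?case .
  qed
qed

end


theorem corollary3p18:
  fixes L :: "(int^'n::finite) set"
    and \<alpha> :: "nat \<Rightarrow> int^'n"
  assumes "CARD('n) \<ge> 2"
    and "homogeneous_lattice L"
    and "is_Z_basis L (CARD('n) - 1) \<alpha>"
  shows "degree_quot (lattice_ideal L :: ('n, 'k::field) mpoly set)
       = fact (CARD('n) - 1) * rel_volume (convex hull (insert 0 (real_vec ` \<alpha> ` {..<CARD('n) - 1})))"
proof -
  obtain m where m: "m = CARD('n) - 1" by simp
  interpret latt L \<alpha> m
    by unfold_locales (use assms m in auto)
  define N where "N = card F"
  have "convex hull (insert 0 (real_vec ` \<alpha> ` {..<CARD('n) - 1})) = P"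
    unfolding m[symmetric] P_def image_image ..
  then have rv: "rel_volume (convex hull (insert 0 (real_vec ` \<alpha> ` {..<CARD('n) - 1}))) = real N / fact m"
    using rel_vol by (simp add: N_def)
  have hp: "is_hilbert_poly (lattice_ideal L :: ('n, 'k) mpoly set) [:real N:]"
    unfolding is_hilbert_poly_def using hilbert_eventually[where 'k='k]
    by eventually_elim (simp add: N_def)
  have uniq: "p = [:real N:]" if "is_hilbert_poly (lattice_ideal L :: ('n, 'k) mpoly set) p" for p
  proof (rule ccontr)
    assume ne: "p \<noteq> [:real N:]"
    have ev: "\<forall>\<^sub>F d in sequentially. poly p (real d) = real N"
      using that hp unfolding is_hilbert_poly_def by eventually_elim simp
    then obtain D where D: "\<And>d. d \<ge> D \<Longrightarrow> poly p (real d) = real N"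
      by (auto simp: eventually_at_top_linorder)
    have "real ` {D..} \<subseteq> {x. poly (p - [:real N:]) x = 0}" using D by auto
    moreover have "finite {x. poly (p - [:real N:]) x = 0}"
      by (rule poly_roots_finite) (use ne in simp)
    ultimately have "finite (real ` {D..})" by (rule finite_subset)
    moreover have "infinite (real ` {D..})"
      using finite_imageD[of real "{D..}"] infinite_Ici[of D] by (auto simp: inj_on_def)
    ultimately show False by simp
  qed
  have the: "(THE p. is_hilbert_poly (lattice_ideal L :: ('n, 'k) mpoly set) p) = [:real N:]"
    using hp uniq by (rule the_equality)
  have "0 \<in> F" unfolding F_def by (rule CollectI, rule exI[of _ "\<lambda>_. 0"]) (simp add: comb_def)
  then have N0: "N \<noteq> 0" using finite_F by (auto simp: N_def)
  have "degree_quot (lattice_ideal L :: ('n, 'k) mpoly set) = real N"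
    unfolding degree_quot_def Let_def the using N0 by simp
  then show ?thesis using rv m by simp
qed


end
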